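(* For $n\in\mathbb{Z}^+$ we have $$\begin{aligned}&t(1,3,16;n)=2N(1,3,16;2n+5)=t(2,2,3;(n-1)/4)&&\text{for } n\equiv 1\pmod 4,\\ &t(1,3,48;n)=2N(1,3,48;2n+13)=t(1,6,6;n/4)&&\text{for } n\equiv 0\pmod 4,\\ &t(1,3,4;n)=\tfrac 43N(1,3,4;2n+2)&&\text{for } n\equiv 3,5\pmod 8,\\ &t(1,3,12;n)=\tfrac 43N(1,3,12;2n+4)&&\text{for } n\equiv 0,2\pmod 8,\\ &t(1,3,36;n)=\tfrac 43N(1,3,36;2n+10)&&\text{for } n\equiv 1,7\pmod 8,\\ &t(3,4,9;n)=\tfrac 43N(3,4,9;2n+4)&&\text{for } n\equiv 2,4\pmod 8.\end{aligned}$$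
   Context: $\mathbb{Z}^+$ is the set of positive integers. For $a,b,c\in\mathbb{Z}^+$ and nonnegative integer $n$, $N(a,b,c;n)$ denotes the number of triples $(x,y,z)\in\mathbb{Z}^3$ with $n=ax^2+by^2+cz^2$, and $t(a,b,c;n)$ denotes the number of triples $(x,y,z)\in\mathbb{Z}^3$ with $n=a\frac{x(x+1)}2+b\frac{y(y+1)}2+c\frac{z(z+1)}2$. *)

theory Defs
  imports Complex_Main
begin

definition N :: "nat \<Rightarrow> nat \<Rightarrow> nat \<Rightarrow> nat \<Rightarrow> nat" where
  "N a b c n = card {(x :: int, y :: int, z :: int).
       int n = int a * x^2 + int b * y^2 + int c * z^2}"

definition t :: "nat \<Rightarrow> nat \<Rightarrow> nat \<Rightarrow> nat \<Rightarrow> nat" where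
  "t a b c n = card {(x :: int, y :: int, z :: int).
       int n = int a * (x * (x + 1) div 2) + int b * (y * (y + 1) div 2)
             + int c * (z * (z + 1) div 2)}"

end

theory Submission
  imports Defs
begin




lemma sq4: "(x::int)^2 mod 4 = (if odd x then 1 else 0)"
proof -
  have "x^2 mod 4 = (x mod 4)^2 mod 4" by (simp add: power_mod)
  moreover have "x mod 4 \<in> {0,1,2,3}" by auto
  ultimately show ?thesis by (auto, presburger+)
qed

lemma sq8: "(x::int)^2 mod 8 = (if odd x then 1 else if x mod 4 = 0 then 0 else 4)"
proof -
  have "x^2 mod 8 = (x mod 8)^2 mod 8" by (simp add: power_mod)
  moreover have "x mod 8 \<in> {0,1,2,3,4,5,6,7}" by auto
  ultimately show ?thesis by (auto, presburger+)
qed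

lemma sq8c:
  fixes x :: int
  obtains "odd x" "x^2 mod 8 = 1" | "4 dvd x" "even x" "x^2 mod 8 = 0" | "even x" "\<not> 4 dvd x" "x^2 mod 8 = 4"
  using sq8[of x] by (auto split: if_splits)

lemma sq4c:
  fixes x :: int
  obtains "odd x" "x^2 mod 4 = 1" | "even x" "x^2 mod 4 = 0"
  using sq4[of x] by (auto split: if_splits)

lemma lin3: "a*X + b*Y + c*Z = (W::int) \<Longrightarrow> (a*(X mod m) + b*(Y mod m) + c*(Z mod m)) mod m = W mod m"
proof -
  assume "a*X + b*Y + c*Z = (W::int)"
  moreover have "(a*(X mod m) + b*(Y mod m) + c*(Z mod m)) mod m = (a*X + b*Y + c*Z) mod m"
    by (intro mod_add_cong mod_mult_cong) simp_all
  ultimately show ?thesis by simp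
qed

lemma oddsum:
  fixes z v w :: int
  assumes "odd z" "odd v" "z^2+3*v^2 = 4*w" shows "odd w"
proof -
  have "(1*(z^2 mod 8) + 3*(v^2 mod 8) + 0*(0 mod 8)) mod 8 = (4*w) mod 8"
    by (rule lin3) (use assms in simp)
  then have "(4*w) mod 8 = 4" using assms(1,2)
    by (cases z rule: sq8c; cases v rule: sq8c) simp_all
  then show ?thesis by presburger
qed

lemma card_wit:
  assumes "\<And>a. a \<in> A \<Longrightarrow> f a \<in> B" "\<And>b. b \<in> B \<Longrightarrow> g b \<in> A"
    "\<And>a. a \<in> A \<Longrightarrow> g (f a) = a" "\<And>b. b \<in> B \<Longrightarrow> f (g b) = b"
  shows "card A = card B"
  by (rule bij_betw_same_card[of f], rule bij_betw_byWitness[of _ g]) (use assms in auto)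

lemma fin_wit:
  assumes "\<And>a. a \<in> A \<Longrightarrow> f a \<in> B" "\<And>a. a \<in> A \<Longrightarrow> g (f a) = a" "finite B"
  shows "finite A"
proof -
  have "A \<subseteq> g ` B" using assms by force
  then show ?thesis using assms finite_surj by blast
qed

lemma absle: "\<bar>x::int\<bar> \<le> x^2"
proof (cases "x = 0")
  case False
  then have "1 \<le> \<bar>x\<bar>" by auto
  then have "\<bar>x\<bar> * 1 \<le> \<bar>x\<bar> * \<bar>x\<bar>" by (intro mult_left_mono) auto
  then show ?thesis by (simp add: power2_eq_square abs_mult_self_eq)
qed simp

lemma fin_box:
  assumes "\<And>x y z. P x y z \<Longrightarrow> \<bar>x\<bar> \<le> B \<and> \<bar>y\<bar> \<le> B \<and> \<bar>z\<bar> \<le> B"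
  shows "finite {(x::int,y::int,z::int). P x y z}"
proof (rule finite_subset)
  show "{(x,y,z). P x y z} \<subseteq> {-B..B} \<times> {-B..B} \<times> {-B..B}"
    using assms by fastforce
qed auto

lemma fin3:
  fixes a b c :: int
  assumes "a \<ge> 1" "b \<ge> 1" "c \<ge> 1"
  shows "finite {(x::int,y::int,z::int). a*x^2 + b*y^2 + c*z^2 = m}"
proof (rule fin_box)
  fix x y z :: int assume h: "a*x^2 + b*y^2 + c*z^2 = m"
  have "x^2 \<le> a*x^2" "y^2 \<le> b*y^2" "z^2 \<le> c*z^2"
    using assms mult_right_mono[of 1 a "x^2"] mult_right_mono[of 1 b "y^2"] mult_right_mono[of 1 c "z^2"] by auto
  moreover have "0 \<le> x^2" "0 \<le> y^2" "0 \<le> z^2" by auto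
  ultimately show "\<bar>x\<bar> \<le> m \<and> \<bar>y\<bar> \<le> m \<and> \<bar>z\<bar> \<le> m"
    using h absle[of x] absle[of y] absle[of z] by linarith
qed

lemma t_odd:
  "t a b c n = card {(x,y,z). odd x \<and> odd y \<and> odd z \<and>
     int a*x^2 + int b*y^2 + int c*z^2 = int (8*n+a+b+c)}"
proof -
  have key: "8 * (x*(x+1) div 2) = (2*x+1)^2 - 1" for x :: int
  proof -
    have "even (x*(x+1))" by auto
    then have "x*(x+1) div 2 * 2 = x*(x+1)" by simp
    then have "8 * (x*(x+1) div 2) = 4*(x*(x+1))" by linarith
    then show ?thesis by (simp add: power2_eq_square algebra_simps)
  qed
  show ?thesis unfolding t_def
  proof (rule card_wit[where f="\<lambda>(x,y,z). (2*x+1,2*y+1,2*z+1)"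
        and g="\<lambda>(x,y,z). ((x - 1) div 2, (y - 1) div 2, (z - 1) div 2)"])
    fix p assume "p \<in> {(x::int, y::int, z::int). int n = int a * (x * (x + 1) div 2) + int b * (y * (y + 1) div 2) + int c * (z * (z + 1) div 2)}"
    then obtain x y z where p: "p = (x,y,z)" and e: "int n = int a * (x * (x + 1) div 2) + int b * (y * (y + 1) div 2) + int c * (z * (z + 1) div 2)" by auto
    have "8 * int n = int a * (8*(x * (x + 1) div 2)) + int b * (8*(y * (y + 1) div 2)) + int c * (8*(z * (z + 1) div 2))"
      using e by (simp add: algebra_simps)
    then have "8 * int n = int a * ((2*x+1)^2-1) + int b * ((2*y+1)^2-1) + int c * ((2*z+1)^2-1)"
      by (simp only: key)
    then show "(case p of (x,y,z) \<Rightarrow> (2*x+1,2*y+1,2*z+1)) \<in> {(x,y,z). odd x \<and> odd y \<and> odd z \<and>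
     int a*x^2 + int b*y^2 + int c*z^2 = int (8*n+a+b+c)}" using p by (simp add: algebra_simps)
  next
    fix p assume "p \<in> {(x,y,z). odd x \<and> odd y \<and> odd z \<and>
     int a*x^2 + int b*y^2 + int c*z^2 = int (8*n+a+b+c)}"
    then obtain x y z where p: "p = (2*x+1,2*y+1,2*z+1)" and e: "int a*(2*x+1)^2 + int b*(2*y+1)^2 + int c*(2*z+1)^2 = int (8*n+a+b+c)"
      by (auto elim!: oddE)
    have "8 * int n = int a * ((2*x+1)^2-1) + int b * ((2*y+1)^2-1) + int c * ((2*z+1)^2-1)"
      using e by (simp add: algebra_simps)
    then have "8 * int n = 8 * (int a * (x * (x + 1) div 2) + int b * (y * (y + 1) div 2) + int c * (z * (z + 1) div 2))"
      by (simp only: key[symmetric]) (simp add: algebra_simps)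
    then show "(case p of (x,y,z) \<Rightarrow> ((x - 1) div 2, (y - 1) div 2, (z - 1) div 2)) \<in> {(x::int, y::int, z::int). int n = int a * (x * (x + 1) div 2) + int b * (y * (y + 1) div 2) + int c * (z * (z + 1) div 2)}"
      using p by simp
  qed (auto elim!: oddE)
qed

lemma rho:
  fixes F :: "int \<Rightarrow> int" and Q :: "int \<Rightarrow> bool"
  assumes fin: "finite {(u,v,z). u^2+3*v^2 = F z \<and> odd (F z) \<and> Q z}"
  shows "card {(x,y,z). odd x \<and> odd y \<and> x^2+3*y^2 = 4*F z \<and> Q z}
       = 2 * card {(u,v,z). u^2+3*v^2 = F z \<and> odd (F z) \<and> Q z}"
proof -
  define B where "B = {(u,v,z). u^2+3*v^2 = F z \<and> odd (F z) \<and> Q z}"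
  define S1 where "S1 = {(x,y,z). odd x \<and> odd y \<and> x^2+3*y^2 = 4*F z \<and> Q z \<and> 4 dvd (x+y)}"
  define S2 where "S2 = {(x,y,z). odd x \<and> odd y \<and> x^2+3*y^2 = 4*F z \<and> Q z \<and> 4 dvd (x-y)}"
  define f1 :: "int\<times>int\<times>int \<Rightarrow> int\<times>int\<times>int" where "f1 = (\<lambda>(x,y,z). (x - 3*((x+y) div 4), (x+y) div 4, z))"
  define g1 :: "int\<times>int\<times>int \<Rightarrow> int\<times>int\<times>int" where "g1 = (\<lambda>(u,v,z). (u+3*v, v-u, z))"
  define f2 :: "int\<times>int\<times>int \<Rightarrow> int\<times>int\<times>int" where "f2 = (\<lambda>(x,y,z). (x - 3*((x-y) div 4), (x-y) div 4, z))"
  define g2 :: "int\<times>int\<times>int \<Rightarrow> int\<times>int\<times>int" where "g2 = (\<lambda>(u,v,z). (u+3*v, u-v, z))"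
  have par: "odd (u^2+3*v^2) \<longleftrightarrow> odd (u+v)" for u v :: int by auto
  have S: "{(x,y,z). odd x \<and> odd y \<and> x^2+3*y^2 = 4*F z \<and> Q z} = S1 \<union> S2"
    unfolding S1_def S2_def by auto presburger
  have disj: "S1 \<inter> S2 = {}" unfolding S1_def S2_def by auto presburger
  have a1: "f1 p \<in> B \<and> g1 (f1 p) = p" if hp: "p \<in> S1" for p
  proof -
    obtain x y z k where p: "p = (x,y,z)" and h: "odd x" "odd y" "x^2+3*y^2 = 4*F z" "Q z" "x+y = 4*k"
      using hp unfolding S1_def by (cases p) (auto simp: dvd_def)
    have k: "(x+y) div 4 = k" using h by simp
    have y: "y = 4*k - x" using h by simp
    have e: "(x - 3*k)^2 + 3*k^2 = F z"
      using h(3) unfolding y by (simp add: power2_eq_square algebra_simps)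
    have "odd (x - 3*k + k)" using h by presburger
    then show ?thesis
      unfolding B_def f1_def g1_def using p k e h par[of "x-3*k" k] y by auto
  qed
  have b1: "g1 p \<in> S1 \<and> f1 (g1 p) = p" if hp: "p \<in> B" for p
  proof -
    obtain u v z where p: "p = (u,v,z)" and h: "u^2+3*v^2 = F z" "odd (F z)" "Q z"
      using hp unfolding B_def by auto
    have o: "odd (u+v)" using h par by metis
    have "(u+3*v)^2 + 3*(v-u)^2 = 4*F z" using h(1) by (simp add: power2_eq_square algebra_simps)
    moreover have "odd (u+3*v)" "odd (v-u)" using o by presburger+
    ultimately show ?thesis
      unfolding S1_def f1_def g1_def using p h by auto
  qed
  have a2: "f2 p \<in> B \<and> g2 (f2 p) = p" if hp: "p \<in> S2" for p
  proof -
    obtain x y z k where p: "p = (x,y,z)" and h: "odd x" "odd y" "x^2+3*y^2 = 4*F z" "Q z" "x-y = 4*k"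
      using hp unfolding S2_def by (cases p) (auto simp: dvd_def)
    have k: "(x-y) div 4 = k" using h by simp
    have y: "y = x - 4*k" using h by simp
    have e: "(x - 3*k)^2 + 3*k^2 = F z"
      using h(3) unfolding y by (simp add: power2_eq_square algebra_simps)
    have "odd (x - 3*k + k)" using h by presburger
    then show ?thesis
      unfolding B_def f2_def g2_def using p k e h par[of "x-3*k" k] y by auto
  qed
  have b2: "g2 p \<in> S2 \<and> f2 (g2 p) = p" if hp: "p \<in> B" for p
  proof -
    obtain u v z where p: "p = (u,v,z)" and h: "u^2+3*v^2 = F z" "odd (F z)" "Q z"
      using hp unfolding B_def by auto
    have o: "odd (u+v)" using h par by metis
    have "(u+3*v)^2 + 3*(u-v)^2 = 4*F z" using h(1) by (simp add: power2_eq_square algebra_simps)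
    moreover have "odd (u+3*v)" "odd (u-v)" using o by presburger+
    ultimately show ?thesis
      unfolding S2_def f2_def g2_def using p h by auto
  qed
  have c1: "card S1 = card B" by (rule card_wit[of S1 f1 B g1]) (use a1 b1 in auto)
  have c2: "card S2 = card B" by (rule card_wit[of S2 f2 B g2]) (use a2 b2 in auto)
  have fB: "finite B" using fin B_def by simp
  have fS1: "finite S1" by (rule fin_wit[of S1 f1 B g1]) (use a1 fB in auto)
  have fS2: "finite S2" by (rule fin_wit[of S2 f2 B g2]) (use a2 fB in auto)
  show ?thesis unfolding S B_def[symmetric]
    using card_Un_disjoint[OF fS1 fS2 disj] c1 c2 by simp
qed


lemma fin3':
  fixes a b c :: int
  assumes "a \<ge> 1" "b \<ge> 1" "c \<ge> 1" "\<And>x y z. P x y z \<Longrightarrow> a*x^2 + b*y^2 + c*z^2 = m"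
  shows "finite {(x::int,y::int,z::int). P x y z}"
  by (rule finite_subset[OF _ fin3[OF assms(1-3), of m]]) (use assms(4) in auto)


lemma half: "even (u::int) \<Longrightarrow> odd (u div 2) \<longleftrightarrow> \<not> 4 dvd u"
  by presburger

lemma div3: "3*X = 4*(D::int) \<Longrightarrow> 3 dvd D \<and> X = 4*(D div 3)"
  by presburger


lemma divrw: "3 dvd (D::int) \<Longrightarrow> (X = D div 3) = (3*X = D)"
  by (auto elim!: dvdE)

lemma fwd1:
  fixes x y v M :: int
  assumes "odd x" "odd y" "2*x^2+2*y^2+3*v^2 = M"
  shows "(x+y)^2+3*v^2+4*((x-y) div 2)^2 = M \<and> (x+y) div 2 + (x-y) div 2 = x \<and> (x+y) div 2 - (x-y) div 2 = y"
proof -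
  obtain z where z: "x - y = 2*z" using assms(1,2) by (metis evenE even_diff odd_add odd_one)
  have y: "y = x - 2*z" using z by simp
  have d2: "(x - y) div 2 = z" unfolding z by simp
  have d1: "(x + y) div 2 = x - z" unfolding y by simp
  show ?thesis unfolding d1 d2 using assms(3) unfolding y by (simp add: power2_eq_square algebra_simps)
qed

lemma cardF1:
  fixes M :: int
  assumes M: "M mod 8 = 7"
  shows "card {(x,y,z). odd x \<and> odd y \<and> odd z \<and> 2*x^2+2*y^2+3*z^2 = M} = card {(u,v,z). u^2+3*v^2+4*z^2 = M}"
proof (rule card_wit[where f="\<lambda>(x,y,v). (x+y, v, (x-y) div 2)" and g="\<lambda>(u,v,z). (u div 2 + z, u div 2 - z, v)"])
  fix p assume "p \<in> {(x,y,z). odd x \<and> odd y \<and> odd z \<and> 2*x^2+2*y^2+3*z^2 = M}"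
  then obtain x y v where p: "p = (x,y,v)" and h: "odd x" "odd y" "odd v" "2*x^2+2*y^2+3*v^2 = M" by auto
  note e = fwd1[OF h(1,2,4)]
  show "(case p of (x,y,v) \<Rightarrow> (x+y, v, (x-y) div 2)) \<in> {(u,v,z). u^2+3*v^2+4*z^2 = M}"
    using e unfolding p by simp
  show "(case (case p of (x,y,v) \<Rightarrow> (x+y, v, (x-y) div 2)) of (u,v,z) \<Rightarrow> (u div 2 + z, u div 2 - z, v)) = p"
    using e unfolding p by simp
next
  fix p assume "p \<in> {(u,v,z). u^2+3*v^2+4*z^2 = M}"
  then obtain u v z where p: "p = (u,v,z)" and h: "u^2+3*v^2+4*z^2 = M" by auto
  have m: "(1*(u^2 mod 8) + 3*(v^2 mod 8) + 4*(z^2 mod 8)) mod 8 = M mod 8"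
    by (rule lin3) (use h in simp)
  have c: "even u \<and> odd v \<and> (4 dvd u \<longleftrightarrow> odd z)" using m M
    by (cases u rule: sq8c; cases v rule: sq8c; cases z rule: sq8c) simp_all
  then obtain a where u: "u = 2*a" by (auto elim: evenE)
  have ha: "odd (u div 2) \<longleftrightarrow> \<not> 4 dvd u" using half[of u] c by blast
  have ua: "u div 2 = a" unfolding u by simp
  have az: "odd a \<longleftrightarrow> even z" using ha c unfolding ua by blast
  have oa: "odd (a+z)" "odd (a-z)" using az by auto
  have eq: "2*(a+z)^2+2*(a-z)^2+3*v^2 = M" using h unfolding u by (simp add: power2_eq_square algebra_simps)
  show "(case p of (u,v,z) \<Rightarrow> (u div 2 + z, u div 2 - z, v)) \<in> {(x,y,z). odd x \<and> odd y \<and> odd z \<and> 2*x^2+2*y^2+3*z^2 = M}"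
    unfolding p using ua oa c eq by simp
  show "(case (case p of (u,v,z) \<Rightarrow> (u div 2 + z, u div 2 - z, v)) of (x,y,v) \<Rightarrow> (x+y, v, (x-y) div 2)) = p"
    unfolding p using ua u by simp
qed



lemma id1:
  assumes "n mod 4 = 1"
  shows "t 1 3 16 n = 2 * N 1 3 16 (2*n+5) \<and> 2 * N 1 3 16 (2*n+5) = t 2 2 3 ((n - 1) div 4)"
proof -
  define k where "k = n div 4"
  have nk: "n = 4*k+1" using assms div_mult_mod_eq[of n 4] unfolding k_def by linarith
  define K :: int where "K = int k"
  have h1: "int (8*n+20) = 32*K+28" and h2: "int (2*n+5) = 8*K+7" and h3: "int (8*((n - 1) div 4) + 7) = 8*K+7"
    unfolding K_def nk by simp_all
  define NS where "NS = {(p::int,v::int,w::int). p^2+3*v^2+16*w^2 = 8*K+7}"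
  have NN: "N 1 3 16 (2*n+5) = card NS" unfolding N_def NS_def
    by (rule arg_cong[where f=card]) (use h2 in auto)
  define E where "E = {(u,v,z). u^2+3*v^2 = 8*K+7 - 4*z^2 \<and> odd (8*K+7 - 4*z^2) \<and> odd z}"
  have T1: "t 1 3 16 n = card {(x,y,z). odd x \<and> odd y \<and> x^2+3*y^2 = 4*(8*K+7 - 4*z^2) \<and> odd z}"
    unfolding t_odd by (rule arg_cong[where f=card]) (use h1 in auto)
  also have "\<dots> = 2 * card E" unfolding E_def
    by (rule rho[where F="\<lambda>z. 8*K+7 - 4*z^2" and Q=odd], rule fin3'[of 1 3 4 _ "8*K+7"]) auto
  finally have T: "t 1 3 16 n = 2 * card E" .
  have cE: "card E = card NS"
  proof (rule card_wit[where f="\<lambda>(u,v,z). (2*z, v, u div 4)" and g="\<lambda>(p,v,w). (4*w, v, p div 2)"])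
    fix x assume "x \<in> E"
    then obtain u v z where x: "x = (u,v,z)" and h: "u^2+3*v^2+4*z^2 = 8*K+7" "odd z" unfolding E_def by auto
    have m: "(1*(u^2 mod 8) + 3*(v^2 mod 8) + 4*(z^2 mod 8)) mod 8 = (8*K+7) mod 8"
      by (rule lin3) (use h in simp)
    have "4 dvd u" using m h(2)
      by (cases u rule: sq8c; cases v rule: sq8c; cases z rule: sq8c) simp_all
    then obtain w where u: "u = 4*w" by auto
    have "(2*z)^2+3*v^2+16*w^2 = 8*K+7" using h unfolding u by (simp add: power2_eq_square algebra_simps)
    then show "(case x of (u,v,z) \<Rightarrow> (2*z, v, u div 4)) \<in> NS"
      and "(case (case x of (u,v,z) \<Rightarrow> (2*z, v, u div 4)) of (p,v,w) \<Rightarrow> (4*w, v, p div 2)) = x"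
      using x u unfolding NS_def by auto
  next
    fix x assume "x \<in> NS"
    then obtain p v w where x: "x = (p,v,w)" and h: "p^2+3*v^2+16*w^2 = 8*K+7" unfolding NS_def by auto
    have m: "(1*(p^2 mod 8) + 3*(v^2 mod 8) + 16*(w^2 mod 8)) mod 8 = (8*K+7) mod 8"
      by (rule lin3) (use h in simp)
    have "even p \<and> \<not> 4 dvd p" using m
      by (cases p rule: sq8c; cases v rule: sq8c; cases w rule: sq8c) simp_all
    then obtain z where p: "p = 2*z" and oz: "odd z" using half[of p] by auto
    have "(4*w)^2+3*v^2 = 8*K+7 - 4*z^2" using h unfolding p by (simp add: power2_eq_square algebra_simps)
    then show "(case x of (p,v,w) \<Rightarrow> (4*w, v, p div 2)) \<in> E"
      and "(case (case x of (p,v,w) \<Rightarrow> (4*w, v, p div 2)) of (u,v,z) \<Rightarrow> (2*z, v, u div 4)) = x"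
      using x p oz unfolding E_def by auto
  qed
  define F where "F = {(u::int,v::int,z::int). u^2+3*v^2+4*z^2 = 8*K+7}"
  define E2 where "E2 = {(u::int,v::int,z::int). u^2+3*v^2+4*z^2 = 8*K+7 \<and> even z}"
  have FE: "F = E \<union> E2" unfolding F_def E_def E2_def by auto
  have finF: "finite F" unfolding F_def by (rule fin3'[of 1 3 4 _ "8*K+7"]) auto
  have disj: "E \<inter> E2 = {}" unfolding E_def E2_def by auto
  have finE: "finite E" "finite E2" using finF FE by auto
  have cE2: "card E2 = card NS"
  proof (rule card_wit[where f="\<lambda>(u,v,z). (u, v, z div 2)" and g="\<lambda>(p,v,w). (p, v, 2*w)"])
    fix x assume "x \<in> E2"
    then obtain u v z where x: "x = (u,v,z)" and h: "u^2+3*v^2+4*z^2 = 8*K+7" "even z" unfolding E2_def by auto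
    then obtain w where z: "z = 2*w" by auto
    have "u^2+3*v^2+16*w^2 = 8*K+7" using h unfolding z by (simp add: power2_eq_square algebra_simps)
    then show "(case x of (u,v,z) \<Rightarrow> (u, v, z div 2)) \<in> NS"
      and "(case (case x of (u,v,z) \<Rightarrow> (u, v, z div 2)) of (p,v,w) \<Rightarrow> (p, v, 2*w)) = x"
      using x z unfolding NS_def by auto
  next
    fix x assume "x \<in> NS"
    then obtain p v w where x: "x = (p,v,w)" and h: "p^2+3*v^2+16*w^2 = 8*K+7" unfolding NS_def by auto
    have "p^2+3*v^2+4*(2*w)^2 = 8*K+7" using h by (simp add: power2_eq_square algebra_simps)
    then show "(case x of (p,v,w) \<Rightarrow> (p, v, 2*w)) \<in> E2"
      and "(case (case x of (p,v,w) \<Rightarrow> (p, v, 2*w)) of (u,v,z) \<Rightarrow> (u, v, z div 2)) = x"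
      using x unfolding E2_def by auto
  qed
  have cF: "card F = 2 * card NS" using FE card_Un_disjoint[OF finE disj] cE cE2 by simp
  have "t 2 2 3 ((n - 1) div 4) = card {(x,y,z). odd x \<and> odd y \<and> odd z \<and> 2*x^2+2*y^2+3*z^2 = 8*K+7}"
    unfolding t_odd by (rule arg_cong[where f=card]) (use h3 in auto)
  also have "\<dots> = card F"
    unfolding F_def by (rule cardF1) simp
  finally have "t 2 2 3 ((n - 1) div 4) = 2 * card NS" using cF by simp
  then show ?thesis using T cE NN by simp
qed


lemma id2:
  assumes "n mod 4 = 0"
  shows "t 1 3 48 n = 2 * N 1 3 48 (2*n+13) \<and> 2 * N 1 3 48 (2*n+13) = t 1 6 6 (n div 4)"
proof -
  define K :: int where "K = int (n div 4)"
  have h1: "int (8*n+52) = 32*K+52" and h2: "int (2*n+13) = 8*K+13" and h3: "int (8*(n div 4) + 13) = 8*K+13"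
    using assms unfolding K_def by auto
  define NS where "NS = {(p::int,q::int,w::int). p^2+3*q^2+48*w^2 = 8*K+13}"
  have NN: "N 1 3 48 (2*n+13) = card NS" unfolding N_def NS_def
    by (rule arg_cong[where f=card]) (use h2 in auto)
  define E where "E = {(u,v,z). u^2+3*v^2 = 8*K+13 - 12*z^2 \<and> odd (8*K+13 - 12*z^2) \<and> odd z}"
  have T1: "t 1 3 48 n = card {(x,y,z). odd x \<and> odd y \<and> x^2+3*y^2 = 4*(8*K+13 - 12*z^2) \<and> odd z}"
    unfolding t_odd by (rule arg_cong[where f=card]) (use h1 in auto)
  also have "\<dots> = 2 * card E" unfolding E_def
    by (rule rho[where F="\<lambda>z. 8*K+13 - 12*z^2" and Q=odd], rule fin3'[of 1 3 12 _ "8*K+13"]) auto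
  finally have T: "t 1 3 48 n = 2 * card E" .
  have cE: "card E = card NS"
  proof (rule card_wit[where f="\<lambda>(u,v,z). (u, 2*z, v div 4)" and g="\<lambda>(p,q,w). (p, 4*w, q div 2)"])
    fix x assume "x \<in> E"
    then obtain u v z where x: "x = (u,v,z)" and h: "u^2+3*v^2+12*z^2 = 8*K+13" "odd z" unfolding E_def by auto
    have m: "(1*(u^2 mod 8) + 3*(v^2 mod 8) + 12*(z^2 mod 8)) mod 8 = (8*K+13) mod 8"
      by (rule lin3) (use h in simp)
    have "4 dvd v" using m h(2)
      by (cases u rule: sq8c; cases v rule: sq8c; cases z rule: sq8c) simp_all
    then obtain w where v: "v = 4*w" by auto
    have "u^2+3*(2*z)^2+48*w^2 = 8*K+13" using h unfolding v by (simp add: power2_eq_square algebra_simps)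
    then show "(case x of (u,v,z) \<Rightarrow> (u, 2*z, v div 4)) \<in> NS"
      and "(case (case x of (u,v,z) \<Rightarrow> (u, 2*z, v div 4)) of (p,q,w) \<Rightarrow> (p, 4*w, q div 2)) = x"
      using x v unfolding NS_def by auto
  next
    fix x assume "x \<in> NS"
    then obtain p q w where x: "x = (p,q,w)" and h: "p^2+3*q^2+48*w^2 = 8*K+13" unfolding NS_def by auto
    have m: "(1*(p^2 mod 8) + 3*(q^2 mod 8) + 48*(w^2 mod 8)) mod 8 = (8*K+13) mod 8"
      by (rule lin3) (use h in simp)
    have "even q \<and> \<not> 4 dvd q" using m
      by (cases p rule: sq8c; cases q rule: sq8c; cases w rule: sq8c) simp_all
    then obtain z where q: "q = 2*z" and oz: "odd z" using half[of q] by auto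
    have "p^2+3*(4*w)^2 = 8*K+13 - 12*z^2" using h unfolding q by (simp add: power2_eq_square algebra_simps)
    then show "(case x of (p,q,w) \<Rightarrow> (p, 4*w, q div 2)) \<in> E"
      and "(case (case x of (p,q,w) \<Rightarrow> (p, 4*w, q div 2)) of (u,v,z) \<Rightarrow> (u, 2*z, v div 4)) = x"
      using x q oz unfolding E_def by auto
  qed
  define F where "F = {(u::int,v::int,z::int). u^2+3*v^2+12*z^2 = 8*K+13}"
  define E2 where "E2 = {(u::int,v::int,z::int). u^2+3*v^2+12*z^2 = 8*K+13 \<and> even z}"
  have FE: "F = E \<union> E2" unfolding F_def E_def E2_def by auto
  have finF: "finite F" unfolding F_def by (rule fin3'[of 1 3 12 _ "8*K+13"]) auto
  have disj: "E \<inter> E2 = {}" unfolding E_def E2_def by auto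
  have finE: "finite E" "finite E2" using finF FE by auto
  have cE2: "card E2 = card NS"
  proof (rule card_wit[where f="\<lambda>(u,v,z). (u, v, z div 2)" and g="\<lambda>(p,v,w). (p, v, 2*w)"])
    fix x assume "x \<in> E2"
    then obtain u v z where x: "x = (u,v,z)" and h: "u^2+3*v^2+12*z^2 = 8*K+13" "even z" unfolding E2_def by auto
    then obtain w where z: "z = 2*w" by auto
    have "u^2+3*v^2+48*w^2 = 8*K+13" using h unfolding z by (simp add: power2_eq_square algebra_simps)
    then show "(case x of (u,v,z) \<Rightarrow> (u, v, z div 2)) \<in> NS"
      and "(case (case x of (u,v,z) \<Rightarrow> (u, v, z div 2)) of (p,v,w) \<Rightarrow> (p, v, 2*w)) = x"
      using x z unfolding NS_def by auto
  next
    fix x assume "x \<in> NS"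
    then obtain p v w where x: "x = (p,v,w)" and h: "p^2+3*v^2+48*w^2 = 8*K+13" unfolding NS_def by auto
    have "p^2+3*v^2+12*(2*w)^2 = 8*K+13" using h by (simp add: power2_eq_square algebra_simps)
    then show "(case x of (p,v,w) \<Rightarrow> (p, v, 2*w)) \<in> E2"
      and "(case (case x of (p,v,w) \<Rightarrow> (p, v, 2*w)) of (u,v,z) \<Rightarrow> (u, v, z div 2)) = x"
      using x unfolding E2_def by auto
  qed
  have cF: "card F = 2 * card NS" using FE card_Un_disjoint[OF finE disj] cE cE2 by simp
  have "t 1 6 6 (n div 4) = card {(x,y,w). odd x \<and> odd y \<and> odd w \<and> x^2+6*y^2+6*w^2 = 8*K+13}"
    unfolding t_odd by (rule arg_cong[where f=card]) (use h3 in auto)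
  also have "\<dots> = card F"
  proof (rule card_wit[where f="\<lambda>(x,y,w). (x, y+w, (y-w) div 2)" and g="\<lambda>(u,v,z). (u, v div 2 + z, v div 2 - z)"])
    fix p assume "p \<in> {(x,y,w). odd x \<and> odd y \<and> odd w \<and> x^2+6*y^2+6*w^2 = 8*K+13}"
    then obtain x y w where p: "p = (x,y,w)" and h: "odd x" "odd y" "odd w" "x^2+6*y^2+6*w^2 = 8*K+13" by auto
    have "even (y - w)" using h by auto
    then obtain z where z: "y - w = 2*z" by (rule evenE)
    have w: "w = y - 2*z" using z by simp
    have "x^2+3*(y+w)^2+12*z^2 = 8*K+13" using h(4) unfolding w by (simp add: power2_eq_square algebra_simps)
    moreover have "(y + w) div 2 = y - z" unfolding w by simp
    ultimately show "(case p of (x,y,w) \<Rightarrow> (x, y+w, (y-w) div 2)) \<in> F"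
      and "(case (case p of (x,y,w) \<Rightarrow> (x, y+w, (y-w) div 2)) of (u,v,z) \<Rightarrow> (u, v div 2 + z, v div 2 - z)) = p"
      using p z w unfolding F_def by auto
  next
    fix p assume "p \<in> F"
    then obtain u v z where p: "p = (u,v,z)" and h: "u^2+3*v^2+12*z^2 = 8*K+13" unfolding F_def by auto
    have m: "(1*(u^2 mod 8) + 3*(v^2 mod 8) + 12*(z^2 mod 8)) mod 8 = (8*K+13) mod 8"
      by (rule lin3) (use h in simp)
    have c: "odd u \<and> even v \<and> (4 dvd v \<longleftrightarrow> odd z)" using m
      by (cases u rule: sq8c; cases v rule: sq8c; cases z rule: sq8c) simp_all
    then obtain a where v: "v = 2*a" by auto
    have "odd a \<longleftrightarrow> \<not> 4 dvd v" using half[of v] c v by simp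
    then have oa: "odd (a+z)" "odd (a-z)" using c by auto
    have "u^2+6*(a+z)^2+6*(a-z)^2 = 8*K+13" using h unfolding v by (simp add: power2_eq_square algebra_simps)
    then show "(case p of (u,v,z) \<Rightarrow> (u, v div 2 + z, v div 2 - z)) \<in> {(x,y,w). odd x \<and> odd y \<and> odd w \<and> x^2+6*y^2+6*w^2 = 8*K+13}"
      and "(case (case p of (u,v,z) \<Rightarrow> (u, v div 2 + z, v div 2 - z)) of (x,y,w) \<Rightarrow> (x, y+w, (y-w) div 2)) = p"
      using p v oa c by auto
  qed
  finally have "t 1 6 6 (n div 4) = 2 * card NS" using cF by simp
  then show ?thesis using T cE NN by simp
qed


lemma id3:
  assumes "n mod 8 \<in> {3,5}"
  shows "3 * t 1 3 4 n = 4 * N 1 3 4 (2*n+2)"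
proof -
  define r :: int where "r = int ((n+1) div 2)"
  have r4: "r mod 4 = 2 \<or> r mod 4 = 3" and hr: "int (2*n+2) = 4*r" and hr2: "int (8*n+8) = 16*r"
    using assms unfolding r_def by auto presburger+
  define C where "C = {(p::int,q::int,a::int). p^2+3*q^2+a^2 = r}"
  have finC: "finite C" unfolding C_def by (rule fin3'[of 1 3 1 _ r]) auto
  have parC: "odd (r - a^2)" if h: "p^2+3*q^2+a^2 = r" for p q a :: int
  proof -
    have m: "(1*(p^2 mod 4) + 3*(q^2 mod 4) + 1*(a^2 mod 4)) mod 4 = r mod 4"
      by (rule lin3) (use h in simp)
    have e: "r - a^2 = p^2+3*q^2" using h by simp
    show ?thesis unfolding e using m r4
      by (cases p rule: sq4c; cases q rule: sq4c; cases a rule: sq4c) simp_all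
  qed
  have T1: "t 1 3 4 n = card {(x,y,z). odd x \<and> odd y \<and> x^2+3*y^2 = 4*(4*r - z^2) \<and> odd z}"
    unfolding t_odd by (rule arg_cong[where f=card]) (use hr2 in auto)
  also have "\<dots> = 2 * card {(u,v,z). u^2+3*v^2 = 4*r - z^2 \<and> odd (4*r - z^2) \<and> odd z}"
    by (rule rho[where F="\<lambda>z. 4*r - z^2" and Q=odd], rule fin3'[of 1 3 1 _ "4*r"]) auto
  also have "card {(u,v,z). u^2+3*v^2 = 4*r - z^2 \<and> odd (4*r - z^2) \<and> odd z}
     = card {(z,v,a). odd z \<and> odd v \<and> z^2+3*v^2 = 4*(r - a^2) \<and> odd (r - a^2)}"
  proof (rule card_wit[where f="\<lambda>(u,v,z). (z,v,u div 2)" and g="\<lambda>(z,v,a). (2*a,v,z)"])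
    fix p assume "p \<in> {(u,v,z). u^2+3*v^2 = 4*r - z^2 \<and> odd (4*r - z^2) \<and> odd z}"
    then obtain u v z where p: "p = (u,v,z)" and h: "u^2+3*v^2 = 4*r - z^2" "odd z" by auto
    have m: "(1*(u^2 mod 4) + 3*(v^2 mod 4) + 1*(z^2 mod 4)) mod 4 = (4*r) mod 4"
      by (rule lin3) (use h in simp)
    have "even u \<and> odd v" using m h(2)
      by (cases u rule: sq4c; cases v rule: sq4c; cases z rule: sq4c) simp_all
    then obtain a where u: "u = 2*a" and ov: "odd v" by auto
    have e: "z^2+3*v^2 = 4*(r - a^2)" using h unfolding u by (simp add: power2_eq_square algebra_simps)
    moreover have "odd (r - a^2)" using oddsum[OF h(2) ov e] .
    ultimately show "(case p of (u,v,z) \<Rightarrow> (z,v,u div 2)) \<in> {(z,v,a). odd z \<and> odd v \<and> z^2+3*v^2 = 4*(r - a^2) \<and> odd (r - a^2)}"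
      and "(case (case p of (u,v,z) \<Rightarrow> (z,v,u div 2)) of (z,v,a) \<Rightarrow> (2*a,v,z)) = p"
      using p u h ov by auto
  next
    fix p assume "p \<in> {(z,v,a). odd z \<and> odd v \<and> z^2+3*v^2 = 4*(r - a^2) \<and> odd (r - a^2)}"
    then obtain z v a where p: "p = (z,v,a)" and h: "odd z" "odd v" "z^2+3*v^2 = 4*(r - a^2)" by auto
    have "(2*a)^2+3*v^2 = 4*r - z^2" using h by (simp add: power2_eq_square algebra_simps)
    then show "(case p of (z,v,a) \<Rightarrow> (2*a,v,z)) \<in> {(u,v,z). u^2+3*v^2 = 4*r - z^2 \<and> odd (4*r - z^2) \<and> odd z}"
      and "(case (case p of (z,v,a) \<Rightarrow> (2*a,v,z)) of (u,v,z) \<Rightarrow> (z,v,u div 2)) = p"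
      using p h by auto
  qed
  also have "card {(z,v,a). odd z \<and> odd v \<and> z^2+3*v^2 = 4*(r - a^2) \<and> odd (r - a^2)}
      = 2 * card {(p,q,a). p^2+3*q^2 = r - a^2 \<and> odd (r - a^2) \<and> odd (r - a^2)}"
    by (rule rho[where F="\<lambda>a. r - a^2" and Q="\<lambda>a. odd (r - a^2)"], rule fin3'[of 1 3 1 _ r]) auto
  also have "{(p,q,a). p^2+3*q^2 = r - a^2 \<and> odd (r - a^2) \<and> odd (r - a^2)} = C"
    unfolding C_def using parC by auto
  finally have T: "t 1 3 4 n = 4 * card C" by simp
  define M where "M = {(u::int,v::int,w::int). u^2+3*v^2+4*w^2 = 4*r}"
  have NM: "N 1 3 4 (2*n+2) = card M" unfolding N_def M_def
    by (rule arg_cong[where f=card]) (use hr in auto)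
  define Ev where "Ev = {(u::int,v::int,w::int). u^2+3*v^2+4*w^2 = 4*r \<and> even u}"
  define Od where "Od = {(u::int,v::int,w::int). odd u \<and> odd v \<and> u^2+3*v^2 = 4*(r - w^2) \<and> odd (r - w^2)}"
  have m4: "odd u = odd v" if h: "u^2+3*v^2+4*w^2 = 4*r" for u v w :: int
  proof -
    have m: "(1*(u^2 mod 4) + 3*(v^2 mod 4) + 4*(w^2 mod 4)) mod 4 = (4*r) mod 4"
      by (rule lin3) (use h in simp)
    then show ?thesis by (cases u rule: sq4c; cases v rule: sq4c) simp_all
  qed
  have MEO: "M = Ev \<union> Od"
  proof (rule set_eqI, rule iffI)
    fix p assume "p \<in> M"
    then obtain u v w where p: "p = (u,v,w)" and h: "u^2+3*v^2+4*w^2 = 4*r" unfolding M_def by auto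
    show "p \<in> Ev \<union> Od"
    proof (cases "even u")
      case True then show ?thesis using h p unfolding Ev_def by auto
    next
      case False
      then have ov: "odd v" using m4[OF h] by simp
      have e: "u^2+3*v^2 = 4*(r - w^2)" using h by simp
      have "odd (r - w^2)" using oddsum[OF _ ov e] False by simp
      then show ?thesis using False p e ov unfolding Od_def by auto
    qed
  qed (auto simp: M_def Ev_def Od_def)
  have finM: "finite M" unfolding M_def by (rule fin3'[of 1 3 4 _ "4*r"]) auto
  have disj: "Ev \<inter> Od = {}" unfolding Ev_def Od_def by auto
  have finEv: "finite Ev" "finite Od" using finM MEO by auto
  have cEv: "card Ev = card C"
  proof (rule card_wit[where f="\<lambda>(u,v,w). (u div 2, v div 2, w)" and g="\<lambda>(p,q,a). (2*p,2*q,a)"])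
    fix p assume "p \<in> Ev"
    then obtain u v w where p: "p = (u,v,w)" and h: "u^2+3*v^2+4*w^2 = 4*r" "even u" unfolding Ev_def by auto
    have "even v" using h m4[OF h(1)] by simp
    then obtain b where v: "v = 2*b" by auto
    obtain a where u: "u = 2*a" using h by auto
    have "a^2+3*b^2+w^2 = r" using h(1) unfolding u v by (simp add: power2_eq_square algebra_simps)
    then show "(case p of (u,v,w) \<Rightarrow> (u div 2, v div 2, w)) \<in> C"
      and "(case (case p of (u,v,w) \<Rightarrow> (u div 2, v div 2, w)) of (p,q,a) \<Rightarrow> (2*p,2*q,a)) = p"
      using p u v unfolding C_def by auto
  next
    fix p assume "p \<in> C"
    then obtain a b w where p: "p = (a,b,w)" and h: "a^2+3*b^2+w^2 = r" unfolding C_def by auto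
    have "(2*a)^2+3*(2*b)^2+4*w^2 = 4*r" using h by (simp add: power2_eq_square algebra_simps)
    then show "(case p of (p,q,a) \<Rightarrow> (2*p,2*q,a)) \<in> Ev"
      and "(case (case p of (p,q,a) \<Rightarrow> (2*p,2*q,a)) of (u,v,w) \<Rightarrow> (u div 2, v div 2, w)) = p"
      using p unfolding Ev_def by auto
  qed
  have "card Od = 2 * card {(p,q,a). p^2+3*q^2 = r - a^2 \<and> odd (r - a^2) \<and> odd (r - a^2)}"
    unfolding Od_def
    by (rule rho[where F="\<lambda>a. r - a^2" and Q="\<lambda>a. odd (r - a^2)"], rule fin3'[of 1 3 1 _ r]) auto
  also have "{(p,q,a). p^2+3*q^2 = r - a^2 \<and> odd (r - a^2) \<and> odd (r - a^2)} = C"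
    unfolding C_def using parC by auto
  finally have cOd: "card Od = 2 * card C" .
  have "N 1 3 4 (2*n+2) = 3 * card C"
    using NM MEO card_Un_disjoint[OF finEv disj] cEv cOd by simp
  then show ?thesis using T by simp
qed


lemma id4:
  assumes "n mod 8 \<in> {0,2}"
  shows "3 * t 1 3 12 n = 4 * N 1 3 12 (2*n+4)"
proof -
  define r :: int where "r = int ((n+2) div 2)"
  have r4: "r mod 4 = 1 \<or> r mod 4 = 2" and hr: "int (2*n+4) = 4*r" and hr2: "int (8*n+16) = 16*r"
    using assms unfolding r_def by auto presburger+
  define C where "C = {(p::int,q::int,a::int). p^2+3*q^2+3*a^2 = r}"
  have parC: "odd (r - 3*a^2)" if h: "p^2+3*q^2+3*a^2 = r" for p q a :: int
  proof -
    have m: "(1*(p^2 mod 4) + 3*(q^2 mod 4) + 3*(a^2 mod 4)) mod 4 = r mod 4"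
      by (rule lin3) (use h in simp)
    have e: "r - 3*a^2 = p^2+3*q^2" using h by simp
    show ?thesis unfolding e using m r4
      by (cases p rule: sq4c; cases q rule: sq4c; cases a rule: sq4c) simp_all
  qed
  have T1: "t 1 3 12 n = card {(x,y,z). odd x \<and> odd y \<and> x^2+3*y^2 = 4*(4*r - 3*z^2) \<and> odd z}"
    unfolding t_odd by (rule arg_cong[where f=card]) (use hr2 in auto)
  also have "\<dots> = 2 * card {(u,v,z). u^2+3*v^2 = 4*r - 3*z^2 \<and> odd (4*r - 3*z^2) \<and> odd z}"
    by (rule rho[where F="\<lambda>z. 4*r - 3*z^2" and Q=odd], rule fin3'[of 1 3 3 _ "4*r"]) auto
  also have "card {(u,v,z). u^2+3*v^2 = 4*r - 3*z^2 \<and> odd (4*r - 3*z^2) \<and> odd z}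
     = card {(u,z,b). odd u \<and> odd z \<and> u^2+3*z^2 = 4*(r - 3*b^2) \<and> odd (r - 3*b^2)}"
  proof (rule card_wit[where f="\<lambda>(u,v,z). (u,z,v div 2)" and g="\<lambda>(u,z,b). (u,2*b,z)"])
    fix p assume "p \<in> {(u,v,z). u^2+3*v^2 = 4*r - 3*z^2 \<and> odd (4*r - 3*z^2) \<and> odd z}"
    then obtain u v z where p: "p = (u,v,z)" and h: "u^2+3*v^2 = 4*r - 3*z^2" "odd z" by auto
    have m: "(1*(u^2 mod 4) + 3*(v^2 mod 4) + 3*(z^2 mod 4)) mod 4 = (4*r) mod 4"
      by (rule lin3) (use h in simp)
    have "odd u \<and> even v" using m h(2)
      by (cases u rule: sq4c; cases v rule: sq4c; cases z rule: sq4c) simp_all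
    then obtain b where v: "v = 2*b" and ou: "odd u" by auto
    have e: "u^2+3*z^2 = 4*(r - 3*b^2)" using h unfolding v by (simp add: power2_eq_square algebra_simps)
    moreover have "odd (r - 3*b^2)" using oddsum[OF ou h(2) e] .
    ultimately show "(case p of (u,v,z) \<Rightarrow> (u,z,v div 2)) \<in> {(u,z,b). odd u \<and> odd z \<and> u^2+3*z^2 = 4*(r - 3*b^2) \<and> odd (r - 3*b^2)}"
      and "(case (case p of (u,v,z) \<Rightarrow> (u,z,v div 2)) of (u,z,b) \<Rightarrow> (u,2*b,z)) = p"
      using p v h ou by auto
  next
    fix p assume "p \<in> {(u,z,b). odd u \<and> odd z \<and> u^2+3*z^2 = 4*(r - 3*b^2) \<and> odd (r - 3*b^2)}"
    then obtain u z b where p: "p = (u,z,b)" and h: "odd u" "odd z" "u^2+3*z^2 = 4*(r - 3*b^2)" by auto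
    have "u^2+3*(2*b)^2 = 4*r - 3*z^2" using h by (simp add: power2_eq_square algebra_simps)
    then show "(case p of (u,z,b) \<Rightarrow> (u,2*b,z)) \<in> {(u,v,z). u^2+3*v^2 = 4*r - 3*z^2 \<and> odd (4*r - 3*z^2) \<and> odd z}"
      and "(case (case p of (u,z,b) \<Rightarrow> (u,2*b,z)) of (u,v,z) \<Rightarrow> (u,z,v div 2)) = p"
      using p h by auto
  qed
  also have "card {(u,z,b). odd u \<and> odd z \<and> u^2+3*z^2 = 4*(r - 3*b^2) \<and> odd (r - 3*b^2)}
      = 2 * card {(p,q,a). p^2+3*q^2 = r - 3*a^2 \<and> odd (r - 3*a^2) \<and> odd (r - 3*a^2)}"
    by (rule rho[where F="\<lambda>a. r - 3*a^2" and Q="\<lambda>a. odd (r - 3*a^2)"], rule fin3'[of 1 3 3 _ r]) auto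
  also have "{(p,q,a). p^2+3*q^2 = r - 3*a^2 \<and> odd (r - 3*a^2) \<and> odd (r - 3*a^2)} = C"
    unfolding C_def using parC by auto
  finally have T: "t 1 3 12 n = 4 * card C" by simp
  define M where "M = {(u::int,v::int,w::int). u^2+3*v^2+12*w^2 = 4*r}"
  have NM: "N 1 3 12 (2*n+4) = card M" unfolding N_def M_def
    by (rule arg_cong[where f=card]) (use hr in auto)
  define Ev where "Ev = {(u::int,v::int,w::int). u^2+3*v^2+12*w^2 = 4*r \<and> even u}"
  define Od where "Od = {(u::int,v::int,w::int). odd u \<and> odd v \<and> u^2+3*v^2 = 4*(r - 3*w^2) \<and> odd (r - 3*w^2)}"
  have m4: "odd u = odd v" if h: "u^2+3*v^2+12*w^2 = 4*r" for u v w :: int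
  proof -
    have m: "(1*(u^2 mod 4) + 3*(v^2 mod 4) + 12*(w^2 mod 4)) mod 4 = (4*r) mod 4"
      by (rule lin3) (use h in simp)
    then show ?thesis by (cases u rule: sq4c; cases v rule: sq4c; cases w rule: sq4c) simp_all
  qed
  have MEO: "M = Ev \<union> Od"
  proof (rule set_eqI, rule iffI)
    fix p assume "p \<in> M"
    then obtain u v w where p: "p = (u,v,w)" and h: "u^2+3*v^2+12*w^2 = 4*r" unfolding M_def by auto
    show "p \<in> Ev \<union> Od"
    proof (cases "even u")
      case True then show ?thesis using h p unfolding Ev_def by auto
    next
      case False
      then have ov: "odd v" using m4[OF h] by simp
      have e: "u^2+3*v^2 = 4*(r - 3*w^2)" using h by simp
      have "odd (r - 3*w^2)" using oddsum[OF _ ov e] False by simp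
      then show ?thesis using False p e ov unfolding Od_def by auto
    qed
  qed (auto simp: M_def Ev_def Od_def)
  have finM: "finite M" unfolding M_def by (rule fin3'[of 1 3 12 _ "4*r"]) auto
  have disj: "Ev \<inter> Od = {}" unfolding Ev_def Od_def by auto
  have finEv: "finite Ev" "finite Od" using finM MEO by auto
  have cEv: "card Ev = card C"
  proof (rule card_wit[where f="\<lambda>(u,v,w). (u div 2, v div 2, w)" and g="\<lambda>(p,q,a). (2*p,2*q,a)"])
    fix p assume "p \<in> Ev"
    then obtain u v w where p: "p = (u,v,w)" and h: "u^2+3*v^2+12*w^2 = 4*r" "even u" unfolding Ev_def by auto
    have "even v" using h m4[OF h(1)] by simp
    then obtain b where v: "v = 2*b" by auto
    obtain a where u: "u = 2*a" using h by auto
    have "a^2+3*b^2+3*w^2 = r" using h(1) unfolding u v by (simp add: power2_eq_square algebra_simps)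
    then show "(case p of (u,v,w) \<Rightarrow> (u div 2, v div 2, w)) \<in> C"
      and "(case (case p of (u,v,w) \<Rightarrow> (u div 2, v div 2, w)) of (p,q,a) \<Rightarrow> (2*p,2*q,a)) = p"
      using p u v unfolding C_def by auto
  next
    fix p assume "p \<in> C"
    then obtain a b w where p: "p = (a,b,w)" and h: "a^2+3*b^2+3*w^2 = r" unfolding C_def by auto
    have "(2*a)^2+3*(2*b)^2+12*w^2 = 4*r" using h by (simp add: power2_eq_square algebra_simps)
    then show "(case p of (p,q,a) \<Rightarrow> (2*p,2*q,a)) \<in> Ev"
      and "(case (case p of (p,q,a) \<Rightarrow> (2*p,2*q,a)) of (u,v,w) \<Rightarrow> (u div 2, v div 2, w)) = p"
      using p unfolding Ev_def by auto
  qed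
  have "card Od = 2 * card {(p,q,a). p^2+3*q^2 = r - 3*a^2 \<and> odd (r - 3*a^2) \<and> odd (r - 3*a^2)}"
    unfolding Od_def
    by (rule rho[where F="\<lambda>a. r - 3*a^2" and Q="\<lambda>a. odd (r - 3*a^2)"], rule fin3'[of 1 3 3 _ r]) auto
  also have "{(p,q,a). p^2+3*q^2 = r - 3*a^2 \<and> odd (r - 3*a^2) \<and> odd (r - 3*a^2)} = C"
    unfolding C_def using parC by auto
  finally have cOd: "card Od = 2 * card C" .
  have "N 1 3 12 (2*n+4) = 3 * card C"
    using NM MEO card_Un_disjoint[OF finEv disj] cEv cOd by simp
  then show ?thesis using T by simp
qed


lemma id5:
  assumes "n mod 8 \<in> {1,7}"
  shows "3 * t 1 3 36 n = 4 * N 1 3 36 (2*n+10)"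
proof -
  define r :: int where "r = int ((n+5) div 2)"
  have r4: "r mod 4 = 2 \<or> r mod 4 = 3" and hr: "int (2*n+10) = 4*r" and hr2: "int (8*n+40) = 16*r"
    using assms unfolding r_def by auto presburger+
  define C where "C = {(p::int,q::int,a::int). p^2+3*q^2+9*a^2 = r}"
  define C' where "C' = {(p::int,q::int,a::int). 3*p^2+9*q^2+a^2 = r}"
  have parC: "odd (r - 9*a^2)" if h: "p^2+3*q^2+9*a^2 = r" for p q a :: int
  proof -
    have m: "(1*(p^2 mod 4) + 3*(q^2 mod 4) + 9*(a^2 mod 4)) mod 4 = r mod 4"
      by (rule lin3) (use h in simp)
    have e: "r - 9*a^2 = p^2+3*q^2" using h by simp
    show ?thesis unfolding e using m r4
      by (cases p rule: sq4c; cases q rule: sq4c; cases a rule: sq4c) simp_all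
  qed
  have parC': "odd (p^2+3*q^2)" if h: "3*p^2+9*q^2+a^2 = r" for p q a :: int
  proof -
    have m: "(3*(p^2 mod 4) + 9*(q^2 mod 4) + 1*(a^2 mod 4)) mod 4 = r mod 4"
      by (rule lin3) (use h in simp)
    show ?thesis using m r4
      by (cases p rule: sq4c; cases q rule: sq4c; cases a rule: sq4c) simp_all
  qed
  have cC: "card C' = card C"
    by (rule card_wit[where f="\<lambda>(p,q,a). (a,p,q)" and g="\<lambda>(a,p,q). (p,q,a)"])
       (auto simp: C_def C'_def)
  have T1: "t 1 3 36 n = card {(x,y,z). odd x \<and> odd y \<and> x^2+3*y^2 = 4*(4*r - 9*z^2) \<and> odd z}"
    unfolding t_odd by (rule arg_cong[where f=card]) (use hr2 in auto)
  also have "\<dots> = 2 * card {(u,v,z). u^2+3*v^2 = 4*r - 9*z^2 \<and> odd (4*r - 9*z^2) \<and> odd z}"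
    by (rule rho[where F="\<lambda>z. 4*r - 9*z^2" and Q=odd], rule fin3'[of 1 3 9 _ "4*r"]) auto
  also have "card {(u,v,z). u^2+3*v^2 = 4*r - 9*z^2 \<and> odd (4*r - 9*z^2) \<and> odd z}
     = card {(v,z,a). odd v \<and> odd z \<and> v^2+3*z^2 = 4*((r - a^2) div 3) \<and> 3 dvd (r - a^2)}"
  proof (rule card_wit[where f="\<lambda>(u,v,z). (v,z,u div 2)" and g="\<lambda>(v,z,a). (2*a,v,z)"])
    fix p assume "p \<in> {(u,v,z). u^2+3*v^2 = 4*r - 9*z^2 \<and> odd (4*r - 9*z^2) \<and> odd z}"
    then obtain u v z where p: "p = (u,v,z)" and h: "u^2+3*v^2 = 4*r - 9*z^2" "odd z" by auto
    have m: "(1*(u^2 mod 4) + 3*(v^2 mod 4) + 9*(z^2 mod 4)) mod 4 = (4*r) mod 4"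
      by (rule lin3) (use h in simp)
    have "even u \<and> odd v" using m h(2)
      by (cases u rule: sq4c; cases v rule: sq4c; cases z rule: sq4c) simp_all
    then obtain a where u: "u = 2*a" and ov: "odd v" by auto
    have "3*(v^2+3*z^2) = 4*(r - a^2)" using h unfolding u by (simp add: power2_eq_square algebra_simps)
    from div3[OF this] have "3 dvd (r - a^2)" "v^2+3*z^2 = 4*((r - a^2) div 3)" by auto
    then show "(case p of (u,v,z) \<Rightarrow> (v,z,u div 2)) \<in> {(v,z,a). odd v \<and> odd z \<and> v^2+3*z^2 = 4*((r - a^2) div 3) \<and> 3 dvd (r - a^2)}"
      and "(case (case p of (u,v,z) \<Rightarrow> (v,z,u div 2)) of (v,z,a) \<Rightarrow> (2*a,v,z)) = p"
      using p u h ov by auto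
  next
    fix p assume "p \<in> {(v,z,a). odd v \<and> odd z \<and> v^2+3*z^2 = 4*((r - a^2) div 3) \<and> 3 dvd (r - a^2)}"
    then obtain v z a where p: "p = (v,z,a)" and h: "odd v" "odd z" "v^2+3*z^2 = 4*((r - a^2) div 3)" "3 dvd (r - a^2)" by auto
    obtain e where e: "r - a^2 = 3*e" using h(4) by auto
    have e1: "v^2+3*z^2 = 4*e" using h(3) unfolding e by simp
    have "(2*a)^2+3*v^2 = 4*r - 9*z^2" using e e1 by (simp add: power_mult_distrib; linarith)
    then show "(case p of (v,z,a) \<Rightarrow> (2*a,v,z)) \<in> {(u,v,z). u^2+3*v^2 = 4*r - 9*z^2 \<and> odd (4*r - 9*z^2) \<and> odd z}"
      and "(case (case p of (v,z,a) \<Rightarrow> (2*a,v,z)) of (u,v,z) \<Rightarrow> (v,z,u div 2)) = p"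
      using p h by auto
  qed
  also have "card {(v,z,a). odd v \<and> odd z \<and> v^2+3*z^2 = 4*((r - a^2) div 3) \<and> 3 dvd (r - a^2)}
      = 2 * card {(p,q,a). p^2+3*q^2 = (r - a^2) div 3 \<and> odd ((r - a^2) div 3) \<and> 3 dvd (r - a^2)}"
    by (rule rho[where F="\<lambda>a. (r - a^2) div 3" and Q="\<lambda>a. 3 dvd (r - a^2)"], rule fin3'[of 3 9 1 _ r])
       (auto simp: divrw)
  also have "{(p,q,a). p^2+3*q^2 = (r - a^2) div 3 \<and> odd ((r - a^2) div 3) \<and> 3 dvd (r - a^2)} = C'"
  proof (rule set_eqI, rule iffI)
    fix x assume "x \<in> {(p,q,a). p^2+3*q^2 = (r - a^2) div 3 \<and> odd ((r - a^2) div 3) \<and> 3 dvd (r - a^2)}"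
    then show "x \<in> C'" unfolding C'_def by (auto simp: divrw)
  next
    fix x assume "x \<in> C'"
    then obtain p q a where x: "x = (p,q,a)" and h: "3*p^2+9*q^2+a^2 = r" unfolding C'_def by auto
    have d: "r - a^2 = 3*(p^2+3*q^2)" using h by simp
    show "x \<in> {(p,q,a). p^2+3*q^2 = (r - a^2) div 3 \<and> odd ((r - a^2) div 3) \<and> 3 dvd (r - a^2)}"
      using x parC'[OF h] d by simp
  qed
  finally have T: "t 1 3 36 n = 4 * card C" using cC by simp
  define M where "M = {(u::int,v::int,w::int). u^2+3*v^2+36*w^2 = 4*r}"
  have NM: "N 1 3 36 (2*n+10) = card M" unfolding N_def M_def
    by (rule arg_cong[where f=card]) (use hr in auto)
  define Ev where "Ev = {(u::int,v::int,w::int). u^2+3*v^2+36*w^2 = 4*r \<and> even u}"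
  define Od where "Od = {(u::int,v::int,w::int). odd u \<and> odd v \<and> u^2+3*v^2 = 4*(r - 9*w^2) \<and> odd (r - 9*w^2)}"
  have m4: "odd u = odd v" if h: "u^2+3*v^2+36*w^2 = 4*r" for u v w :: int
  proof -
    have m: "(1*(u^2 mod 4) + 3*(v^2 mod 4) + 36*(w^2 mod 4)) mod 4 = (4*r) mod 4"
      by (rule lin3) (use h in simp)
    then show ?thesis by (cases u rule: sq4c; cases v rule: sq4c; cases w rule: sq4c) simp_all
  qed
  have MEO: "M = Ev \<union> Od"
  proof (rule set_eqI, rule iffI)
    fix p assume "p \<in> M"
    then obtain u v w where p: "p = (u,v,w)" and h: "u^2+3*v^2+36*w^2 = 4*r" unfolding M_def by auto
    show "p \<in> Ev \<union> Od"
    proof (cases "even u")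
      case True then show ?thesis using h p unfolding Ev_def by auto
    next
      case False
      then have ov: "odd v" using m4[OF h] by simp
      have e: "u^2+3*v^2 = 4*(r - 9*w^2)" using h by simp
      have "odd (r - 9*w^2)" using oddsum[OF _ ov e] False by simp
      then show ?thesis using False p e ov unfolding Od_def by auto
    qed
  qed (auto simp: M_def Ev_def Od_def)
  have finM: "finite M" unfolding M_def by (rule fin3'[of 1 3 36 _ "4*r"]) auto
  have disj: "Ev \<inter> Od = {}" unfolding Ev_def Od_def by auto
  have finEv: "finite Ev" "finite Od" using finM MEO by auto
  have cEv: "card Ev = card C"
  proof (rule card_wit[where f="\<lambda>(u,v,w). (u div 2, v div 2, w)" and g="\<lambda>(p,q,a). (2*p,2*q,a)"])
    fix p assume "p \<in> Ev"
    then obtain u v w where p: "p = (u,v,w)" and h: "u^2+3*v^2+36*w^2 = 4*r" "even u" unfolding Ev_def by auto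
    have "even v" using h m4[OF h(1)] by simp
    then obtain b where v: "v = 2*b" by auto
    obtain a where u: "u = 2*a" using h by auto
    have "a^2+3*b^2+9*w^2 = r" using h(1) unfolding u v by (simp add: power2_eq_square algebra_simps)
    then show "(case p of (u,v,w) \<Rightarrow> (u div 2, v div 2, w)) \<in> C"
      and "(case (case p of (u,v,w) \<Rightarrow> (u div 2, v div 2, w)) of (p,q,a) \<Rightarrow> (2*p,2*q,a)) = p"
      using p u v unfolding C_def by auto
  next
    fix p assume "p \<in> C"
    then obtain a b w where p: "p = (a,b,w)" and h: "a^2+3*b^2+9*w^2 = r" unfolding C_def by auto
    have "(2*a)^2+3*(2*b)^2+36*w^2 = 4*r" using h by (simp add: power2_eq_square algebra_simps)
    then show "(case p of (p,q,a) \<Rightarrow> (2*p,2*q,a)) \<in> Ev"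
      and "(case (case p of (p,q,a) \<Rightarrow> (2*p,2*q,a)) of (u,v,w) \<Rightarrow> (u div 2, v div 2, w)) = p"
      using p unfolding Ev_def by auto
  qed
  have "card Od = 2 * card {(p,q,a). p^2+3*q^2 = r - 9*a^2 \<and> odd (r - 9*a^2) \<and> odd (r - 9*a^2)}"
    unfolding Od_def
    by (rule rho[where F="\<lambda>a. r - 9*a^2" and Q="\<lambda>a. odd (r - 9*a^2)"], rule fin3'[of 1 3 9 _ r]) auto
  also have "{(p,q,a). p^2+3*q^2 = r - 9*a^2 \<and> odd (r - 9*a^2) \<and> odd (r - 9*a^2)} = C"
    unfolding C_def using parC by auto
  finally have cOd: "card Od = 2 * card C" .
  have "N 1 3 36 (2*n+10) = 3 * card C"
    using NM MEO card_Un_disjoint[OF finEv disj] cEv cOd by simp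
  then show ?thesis using T by simp
qed


lemma id6:
  assumes "n mod 8 \<in> {2,4}"
  shows "3 * t 3 4 9 n = 4 * N 3 4 9 (2*n+4)"
proof -
  define r :: int where "r = int ((n+2) div 2)"
  have r4: "r mod 4 = 2 \<or> r mod 4 = 3" and hr: "int (2*n+4) = 4*r" and hr2: "int (8*n+16) = 16*r"
    using assms unfolding r_def by auto presburger+
  define C where "C = {(p::int,q::int,a::int). p^2+3*q^2+9*a^2 = r}"
  define C' where "C' = {(p::int,q::int,a::int). 3*p^2+9*q^2+a^2 = r}"
  have parC: "odd (r - 9*a^2)" if h: "p^2+3*q^2+9*a^2 = r" for p q a :: int
  proof -
    have m: "(1*(p^2 mod 4) + 3*(q^2 mod 4) + 9*(a^2 mod 4)) mod 4 = r mod 4"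
      by (rule lin3) (use h in simp)
    have e: "r - 9*a^2 = p^2+3*q^2" using h by simp
    show ?thesis unfolding e using m r4
      by (cases p rule: sq4c; cases q rule: sq4c; cases a rule: sq4c) simp_all
  qed
  have parC': "odd (p^2+3*q^2)" if h: "3*p^2+9*q^2+a^2 = r" for p q a :: int
  proof -
    have m: "(3*(p^2 mod 4) + 9*(q^2 mod 4) + 1*(a^2 mod 4)) mod 4 = r mod 4"
      by (rule lin3) (use h in simp)
    show ?thesis using m r4
      by (cases p rule: sq4c; cases q rule: sq4c; cases a rule: sq4c) simp_all
  qed
  have cC: "card C' = card C"
    by (rule card_wit[where f="\<lambda>(p,q,a). (a,p,q)" and g="\<lambda>(a,p,q). (p,q,a)"])
       (auto simp: C_def C'_def)
  have C'eq: "{(p,q,y). p^2+3*q^2 = (r - y^2) div 3 \<and> odd ((r - y^2) div 3) \<and> 3 dvd (r - y^2)} = C'"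
  proof (rule set_eqI, rule iffI)
    fix x assume "x \<in> {(p,q,y). p^2+3*q^2 = (r - y^2) div 3 \<and> odd ((r - y^2) div 3) \<and> 3 dvd (r - y^2)}"
    then show "x \<in> C'" unfolding C'_def by (auto simp: divrw)
  next
    fix x assume "x \<in> C'"
    then obtain p q a where x: "x = (p,q,a)" and h: "3*p^2+9*q^2+a^2 = r" unfolding C'_def by auto
    have d: "r - a^2 = 3*(p^2+3*q^2)" using h by simp
    show "x \<in> {(p,q,y). p^2+3*q^2 = (r - y^2) div 3 \<and> odd ((r - y^2) div 3) \<and> 3 dvd (r - y^2)}"
      using x parC'[OF h] d by simp
  qed
  have T1: "t 3 4 9 n = card {(x,y,z). odd x \<and> odd y \<and> odd z \<and> 3*x^2+4*y^2+9*z^2 = 16*r}"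
    unfolding t_odd by (rule arg_cong[where f=card]) (use hr2 in auto)
  also have "\<dots> = card {(x,z,y). odd x \<and> odd z \<and> x^2+3*z^2 = 4*((4*r - y^2) div 3) \<and> (odd y \<and> 3 dvd (4*r - y^2))}"
  proof (rule card_wit[where f="\<lambda>(x,y,z). (x,z,y)" and g="\<lambda>(x,z,y). (x,y,z)"])
    fix p assume "p \<in> {(x,y,z). odd x \<and> odd y \<and> odd z \<and> 3*x^2+4*y^2+9*z^2 = 16*r}"
    then obtain x y z where p: "p = (x,y,z)" and h: "odd x" "odd y" "odd z" "3*x^2+4*y^2+9*z^2 = 16*r" by auto
    have "3*(x^2+3*z^2) = 4*(4*r - y^2)" using h by simp
    from div3[OF this] show "(case p of (x,y,z) \<Rightarrow> (x,z,y)) \<in> {(x,z,y). odd x \<and> odd z \<and> x^2+3*z^2 = 4*((4*r - y^2) div 3) \<and> (odd y \<and> 3 dvd (4*r - y^2))}"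
      using p h by auto
    show "(case (case p of (x,y,z) \<Rightarrow> (x,z,y)) of (x,z,y) \<Rightarrow> (x,y,z)) = p" using p by simp
  next
    fix p assume "p \<in> {(x,z,y). odd x \<and> odd z \<and> x^2+3*z^2 = 4*((4*r - y^2) div 3) \<and> (odd y \<and> 3 dvd (4*r - y^2))}"
    then obtain x y z where p: "p = (x,z,y)" and h: "odd x" "odd y" "odd z" "x^2+3*z^2 = 4*((4*r - y^2) div 3)" "3 dvd (4*r - y^2)" by auto
    obtain e where e: "4*r - y^2 = 3*e" using h(5) by auto
    have e1: "x^2+3*z^2 = 4*e" using h(4) unfolding e by simp
    have "3*x^2+4*y^2+9*z^2 = 16*r" using e e1 by linarith
    then show "(case p of (x,z,y) \<Rightarrow> (x,y,z)) \<in> {(x,y,z). odd x \<and> odd y \<and> odd z \<and> 3*x^2+4*y^2+9*z^2 = 16*r}"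
      using p h by auto
    show "(case (case p of (x,z,y) \<Rightarrow> (x,y,z)) of (x,y,z) \<Rightarrow> (x,z,y)) = p" using p by simp
  qed
  also have "\<dots> = 2 * card {(p,q,y). p^2+3*q^2 = (4*r - y^2) div 3 \<and> odd ((4*r - y^2) div 3) \<and> (odd y \<and> 3 dvd (4*r - y^2))}"
    by (rule rho[where F="\<lambda>y. (4*r - y^2) div 3" and Q="\<lambda>y. odd y \<and> 3 dvd (4*r - y^2)"], rule fin3'[of 3 9 1 _ "4*r"])
       (auto simp: divrw)
  also have "{(p,q,y). p^2+3*q^2 = (4*r - y^2) div 3 \<and> odd ((4*r - y^2) div 3) \<and> (odd y \<and> 3 dvd (4*r - y^2))}
      = {(p,q,y). 3*p^2+9*q^2+y^2 = 4*r \<and> odd y}"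
  proof (rule set_eqI, rule iffI)
    fix x assume "x \<in> {(p,q,y). p^2+3*q^2 = (4*r - y^2) div 3 \<and> odd ((4*r - y^2) div 3) \<and> (odd y \<and> 3 dvd (4*r - y^2))}"
    then show "x \<in> {(p,q,y). 3*p^2+9*q^2+y^2 = 4*r \<and> odd y}" by (auto simp: divrw)
  next
    fix x assume "x \<in> {(p,q,y). 3*p^2+9*q^2+y^2 = 4*r \<and> odd y}"
    then obtain p q y where x: "x = (p,q,y)" and h: "3*p^2+9*q^2+y^2 = 4*r" "odd y" by auto
    have d: "4*r - y^2 = 3*(p^2+3*q^2)" using h by simp
    have m: "(3*(p^2 mod 4) + 9*(q^2 mod 4) + 1*(y^2 mod 4)) mod 4 = (4*r) mod 4"
      by (rule lin3) (use h in simp)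
    have "odd (p^2+3*q^2)" using m h(2)
      by (cases p rule: sq4c; cases q rule: sq4c; cases y rule: sq4c) simp_all
    moreover have "(4*r - y^2) div 3 = p^2+3*q^2" "3 dvd (4*r - y^2)" unfolding d by simp_all
    ultimately show "x \<in> {(p,q,y). p^2+3*q^2 = (4*r - y^2) div 3 \<and> odd ((4*r - y^2) div 3) \<and> (odd y \<and> 3 dvd (4*r - y^2))}"
      using x h by simp
  qed
  also have "card {(p,q,y). 3*p^2+9*q^2+y^2 = 4*r \<and> odd y}
     = card {(y,p,c). odd y \<and> odd p \<and> y^2+3*p^2 = 4*(r - 9*c^2) \<and> odd (r - 9*c^2)}"
  proof (rule card_wit[where f="\<lambda>(p,q,y). (y,p,q div 2)" and g="\<lambda>(y,p,c). (p,2*c,y)"])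
    fix x assume "x \<in> {(p,q,y). 3*p^2+9*q^2+y^2 = 4*r \<and> odd y}"
    then obtain p q y where x: "x = (p,q,y)" and h: "3*p^2+9*q^2+y^2 = 4*r" "odd y" by auto
    have m: "(3*(p^2 mod 4) + 9*(q^2 mod 4) + 1*(y^2 mod 4)) mod 4 = (4*r) mod 4"
      by (rule lin3) (use h in simp)
    have "odd p \<and> even q" using m h(2)
      by (cases p rule: sq4c; cases q rule: sq4c; cases y rule: sq4c) simp_all
    then obtain c where q: "q = 2*c" and op: "odd p" by auto
    have e: "y^2+3*p^2 = 4*(r - 9*c^2)" using h unfolding q by (simp add: power2_eq_square algebra_simps)
    moreover have "odd (r - 9*c^2)" using oddsum[OF h(2) op e] .
    ultimately show "(case x of (p,q,y) \<Rightarrow> (y,p,q div 2)) \<in> {(y,p,c). odd y \<and> odd p \<and> y^2+3*p^2 = 4*(r - 9*c^2) \<and> odd (r - 9*c^2)}"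
      and "(case (case x of (p,q,y) \<Rightarrow> (y,p,q div 2)) of (y,p,c) \<Rightarrow> (p,2*c,y)) = x"
      using x q h op by auto
  next
    fix x assume "x \<in> {(y,p,c). odd y \<and> odd p \<and> y^2+3*p^2 = 4*(r - 9*c^2) \<and> odd (r - 9*c^2)}"
    then obtain y p c where x: "x = (y,p,c)" and h: "odd y" "odd p" "y^2+3*p^2 = 4*(r - 9*c^2)" by auto
    have "3*p^2+9*(2*c)^2+y^2 = 4*r" using h by (simp add: power2_eq_square algebra_simps)
    then show "(case x of (y,p,c) \<Rightarrow> (p,2*c,y)) \<in> {(p,q,y). 3*p^2+9*q^2+y^2 = 4*r \<and> odd y}"
      and "(case (case x of (y,p,c) \<Rightarrow> (p,2*c,y)) of (p,q,y) \<Rightarrow> (y,p,q div 2)) = x"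
      using x h by auto
  qed
  also have "card {(y,p,c). odd y \<and> odd p \<and> y^2+3*p^2 = 4*(r - 9*c^2) \<and> odd (r - 9*c^2)}
      = 2 * card {(p,q,a). p^2+3*q^2 = r - 9*a^2 \<and> odd (r - 9*a^2) \<and> odd (r - 9*a^2)}"
    by (rule rho[where F="\<lambda>a. r - 9*a^2" and Q="\<lambda>a. odd (r - 9*a^2)"], rule fin3'[of 1 3 9 _ r]) auto
  also have "{(p,q,a). p^2+3*q^2 = r - 9*a^2 \<and> odd (r - 9*a^2) \<and> odd (r - 9*a^2)} = C"
    unfolding C_def using parC by auto
  finally have T: "t 3 4 9 n = 4 * card C" by simp
  define M where "M = {(x::int,y::int,z::int). 3*x^2+4*y^2+9*z^2 = 4*r}"
  have NM: "N 3 4 9 (2*n+4) = card M" unfolding N_def M_def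
    by (rule arg_cong[where f=card]) (use hr in auto)
  define Ev where "Ev = {(x::int,y::int,z::int). 3*x^2+4*y^2+9*z^2 = 4*r \<and> even x}"
  define Od where "Od = {(x::int,y::int,z::int). 3*x^2+4*y^2+9*z^2 = 4*r \<and> odd x}"
  have m4: "odd x = odd z" if h: "3*x^2+4*y^2+9*z^2 = 4*r" for x y z :: int
  proof -
    have m: "(3*(x^2 mod 4) + 4*(y^2 mod 4) + 9*(z^2 mod 4)) mod 4 = (4*r) mod 4"
      by (rule lin3) (use h in simp)
    then show ?thesis by (cases x rule: sq4c; cases z rule: sq4c) simp_all
  qed
  have MEO: "M = Ev \<union> Od" unfolding M_def Ev_def Od_def by auto
  have finM: "finite M" unfolding M_def by (rule fin3'[of 3 4 9 _ "4*r"]) auto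
  have disj: "Ev \<inter> Od = {}" unfolding Ev_def Od_def by auto
  have finEv: "finite Ev" "finite Od" using finM MEO by auto
  have cEv: "card Ev = card C"
  proof (rule card_wit[where f="\<lambda>(x,y,z). (y, x div 2, z div 2)" and g="\<lambda>(a,b,c). (2*b,a,2*c)"])
    fix p assume "p \<in> Ev"
    then obtain x y z where p: "p = (x,y,z)" and h: "3*x^2+4*y^2+9*z^2 = 4*r" "even x" unfolding Ev_def by auto
    have "even z" using h m4[OF h(1)] by simp
    then obtain c where z: "z = 2*c" by auto
    obtain b where x: "x = 2*b" using h by auto
    have "y^2+3*b^2+9*c^2 = r" using h(1) unfolding x z by (simp add: power2_eq_square algebra_simps)
    then show "(case p of (x,y,z) \<Rightarrow> (y, x div 2, z div 2)) \<in> C"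
      and "(case (case p of (x,y,z) \<Rightarrow> (y, x div 2, z div 2)) of (a,b,c) \<Rightarrow> (2*b,a,2*c)) = p"
      using p x z unfolding C_def by auto
  next
    fix p assume "p \<in> C"
    then obtain a b c where p: "p = (a,b,c)" and h: "a^2+3*b^2+9*c^2 = r" unfolding C_def by auto
    have "3*(2*b)^2+4*a^2+9*(2*c)^2 = 4*r" using h by (simp add: power2_eq_square algebra_simps)
    then show "(case p of (a,b,c) \<Rightarrow> (2*b,a,2*c)) \<in> Ev"
      and "(case (case p of (a,b,c) \<Rightarrow> (2*b,a,2*c)) of (x,y,z) \<Rightarrow> (y, x div 2, z div 2)) = p"
      using p unfolding Ev_def by auto
  qed
  have "card Od = card {(x,z,y). odd x \<and> odd z \<and> x^2+3*z^2 = 4*((r - y^2) div 3) \<and> 3 dvd (r - y^2)}"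
  proof (rule card_wit[where f="\<lambda>(x,y,z). (x,z,y)" and g="\<lambda>(x,z,y). (x,y,z)"])
    fix p assume "p \<in> Od"
    then obtain x y z where p: "p = (x,y,z)" and h: "3*x^2+4*y^2+9*z^2 = 4*r" "odd x" unfolding Od_def by auto
    have oz: "odd z" using h m4[OF h(1)] by simp
    have "3*(x^2+3*z^2) = 4*(r - y^2)" using h by simp
    from div3[OF this] show "(case p of (x,y,z) \<Rightarrow> (x,z,y)) \<in> {(x,z,y). odd x \<and> odd z \<and> x^2+3*z^2 = 4*((r - y^2) div 3) \<and> 3 dvd (r - y^2)}"
      using p h oz by auto
    show "(case (case p of (x,y,z) \<Rightarrow> (x,z,y)) of (x,z,y) \<Rightarrow> (x,y,z)) = p" using p by simp
  next
    fix p assume "p \<in> {(x,z,y). odd x \<and> odd z \<and> x^2+3*z^2 = 4*((r - y^2) div 3) \<and> 3 dvd (r - y^2)}"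
    then obtain x y z where p: "p = (x,z,y)" and h: "odd x" "odd z" "x^2+3*z^2 = 4*((r - y^2) div 3)" "3 dvd (r - y^2)" by auto
    obtain e where e: "r - y^2 = 3*e" using h(4) by auto
    have e1: "x^2+3*z^2 = 4*e" using h(3) unfolding e by simp
    have "3*x^2+4*y^2+9*z^2 = 4*r" using e e1 by linarith
    then show "(case p of (x,z,y) \<Rightarrow> (x,y,z)) \<in> Od"
      using p h unfolding Od_def by auto
    show "(case (case p of (x,z,y) \<Rightarrow> (x,y,z)) of (x,y,z) \<Rightarrow> (x,z,y)) = p" using p by simp
  qed
  also have "\<dots> = 2 * card {(p,q,y). p^2+3*q^2 = (r - y^2) div 3 \<and> odd ((r - y^2) div 3) \<and> 3 dvd (r - y^2)}"
    by (rule rho[where F="\<lambda>y. (r - y^2) div 3" and Q="\<lambda>y. 3 dvd (r - y^2)"], rule fin3'[of 3 9 1 _ r])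
       (auto simp: divrw)
  also have "\<dots> = 2 * card C" unfolding C'eq cC ..
  finally have cOd: "card Od = 2 * card C" .
  have "N 3 4 9 (2*n+4) = 3 * card C"
    using NM MEO card_Un_disjoint[OF finEv disj] cEv cOd by simp
  then show ?thesis using T by simp
qed


theorem theorem4p1:
  fixes n :: nat
  assumes "n > 0"
  shows "(n mod 4 = 1 \<longrightarrow>
            t 1 3 16 n = 2 * N 1 3 16 (2*n + 5) \<and> 2 * N 1 3 16 (2*n + 5) = t 2 2 3 ((n - 1) div 4))
       \<and> (n mod 4 = 0 \<longrightarrow>
            t 1 3 48 n = 2 * N 1 3 48 (2*n + 13) \<and> 2 * N 1 3 48 (2*n + 13) = t 1 6 6 (n div 4))
       \<and> (n mod 8 \<in> {3, 5} \<longrightarrow> real (t 1 3 4 n) = 4/3 * real (N 1 3 4 (2*n + 2)))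
       \<and> (n mod 8 \<in> {0, 2} \<longrightarrow> real (t 1 3 12 n) = 4/3 * real (N 1 3 12 (2*n + 4)))
       \<and> (n mod 8 \<in> {1, 7} \<longrightarrow> real (t 1 3 36 n) = 4/3 * real (N 1 3 36 (2*n + 10)))
       \<and> (n mod 8 \<in> {2, 4} \<longrightarrow> real (t 3 4 9 n) = 4/3 * real (N 3 4 9 (2*n + 4)))"
  proof -
  have A: "real (t a b c m) = 4/3 * real (N a b c k)" if h: "3 * t a b c m = 4 * N a b c k" for a b c m k
  proof -
    have "real (3 * t a b c m) = real (4 * N a b c k)" using h by simp
    then have "3 * real (t a b c m) = 4 * real (N a b c k)" by simp
    then show ?thesis by simp
  qed
  show ?thesis
    using id1[of n] id2[of n] A[OF id3[of n]] A[OF id4[of n]] A[OF id5[of n]] A[OF id6[of n]]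
    by blast
qed

end
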